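(* Let $G$ be a locally compact Abelian group and $(G, \mathbb{R}^d \times H_1, \mathcal{L})$ a cut and project scheme, with $H_1$ a locally compact Abelian group. For $h$ on $\mathbb R^d\times H_1$ write $\omega_h=\sum_{(x,x^\star)\in\mathcal L}h(x^\star)\delta_x$. (i) If $\phi \in \mathcal{S}(\mathbb{R}^d)$, $\psi \in C_c(H_1)$ and $h=\phi \otimes \psi$, then $\omega_h$ is a measure (i.e. $\sum_{x\in L\cap K}|h(x^\star)|<\infty$ for every compact $K\subseteq G$). (ii) For each compact $K \subseteq G$ and compact $W \subseteq H_1$ there exists a constant $C=C(K,W)$ such that for all $\phi \in \mathcal{S}(\mathbb{R}^d)$ and $\psi \in C_c(H_1)$ with $\operatorname{supp}(\psi) \subseteq W$, \[ \| \omega_{\phi \otimes \psi} \|_K \leq C \|\psi\|_\infty \big\| (1+|x|^{2d}) \phi(x) \big\|_\infty . \]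
   Context: Cut and project scheme $(G,H,\mathcal L)$: $\mathcal L\subseteq G\times H$ a lattice (discrete co-compact subgroup) with $\pi_H(\mathcal L)$ dense in $H$ and $\pi_G|_{\mathcal L}$ injective; $L=\pi_G(\mathcal L)$ and $\mathcal L=\{(x,x^\star):x\in L\}$. $\mathcal S(\mathbb R^d)$ is the Schwartz space; $(\phi\otimes\psi)(x,y)=\phi(x)\psi(y)$. For a measure $\mu$ and compact $K$, $\|\mu\|_K=\sup_{t\in G}|\mu|(t+K)$. *)

theory Defs
  imports "HOL-Analysis.Analysis" "HOL-Library.Product_Plus"
begin

definition lca_group :: "('a::{ab_group_add, t2_space}) itself \<Rightarrow> bool" where
  "lca_group _ \<longleftrightarrow>
     continuous_on UNIV (\<lambda>p::'a \<times> 'a. fst p + snd p) \<and>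
     continuous_on UNIV (uminus :: 'a \<Rightarrow> 'a) \<and>
     locally_compact_space (euclidean :: 'a topology)"

definition cut_and_project ::
  "('g::{ab_group_add, t2_space} \<times> 'h::{ab_group_add, t2_space}) set \<Rightarrow> bool" where
  "cut_and_project \<L> \<longleftrightarrow>
     0 \<in> \<L> \<and> (\<forall>a\<in>\<L>. \<forall>b\<in>\<L>. a + b \<in> \<L>) \<and> (\<forall>a\<in>\<L>. - a \<in> \<L>) \<and>
     (\<forall>z\<in>\<L>. \<exists>U. open U \<and> z \<in> U \<and> U \<inter> \<L> = {z}) \<and>
     (\<exists>C. compact C \<and> (\<forall>w. \<exists>l\<in>\<L>. \<exists>c\<in>C. w = l + c)) \<and>
     closure (snd ` \<L>) = UNIV \<and>
     inj_on fst \<L>"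

text \<open>Partial derivative in direction of the i-th coordinate axis, and iterated
  partial derivatives indexed by a list of coordinates (a multi-index).\<close>
definition pdiff :: "'n::finite \<Rightarrow> (real^'n \<Rightarrow> complex) \<Rightarrow> real^'n \<Rightarrow> complex" where
  "pdiff i f x = vector_derivative (\<lambda>t. f (x + t *\<^sub>R axis i 1)) (at 0)"

fun pdiffs :: "'n::finite list \<Rightarrow> (real^'n \<Rightarrow> complex) \<Rightarrow> real^'n \<Rightarrow> complex" where
  "pdiffs [] f = f"
| "pdiffs (i # is) f = pdiff i (pdiffs is f)"

definition schwartz :: "(real^'n::finite \<Rightarrow> complex) \<Rightarrow> bool" where
  "schwartz f \<longleftrightarrow>
     (\<forall>is. \<forall>x. pdiffs is f differentiable (at x)) \<and>
     (\<forall>is. \<forall>N::nat. bounded (range (\<lambda>x. (1 + norm x) ^ N * norm (pdiffs is f x))))"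

definition Cc :: "('h::topological_space \<Rightarrow> complex) \<Rightarrow> bool" where
  "Cc \<psi> \<longleftrightarrow> continuous_on UNIV \<psi> \<and> compact (closure {y. \<psi> y \<noteq> 0})"

definition supp :: "('h::topological_space \<Rightarrow> complex) \<Rightarrow> 'h set" where
  "supp \<psi> = closure {y. \<psi> y \<noteq> 0}"

text \<open>Total variation of omega_{phi (x) psi} on a set A:
  sum over (x,x*) in L with x in A of |phi(x*_1) psi(x*_2)|.\<close>
definition omega_var ::
  "('g \<times> (real^'n) \<times> 'h) set \<Rightarrow> (real^'n \<Rightarrow> complex) \<Rightarrow> ('h \<Rightarrow> complex) \<Rightarrow> 'g set \<Rightarrow> real" where
  "omega_var \<L> \<phi> \<psi> A =
     infsum (\<lambda>p. norm (\<phi> (fst (snd p)) * \<psi> (snd (snd p)))) {p\<in>\<L>. fst p \<in> A}"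

end

theory Submission
  imports Defs
begin

lemma sub_nhd:
  fixes U :: "'a::{ab_group_add,topological_space} set"
  assumes c: "continuous_on UNIV (\<lambda>p::'a\<times>'a. fst p - snd p)" and U: "open U" "0 \<in> U"
  shows "\<exists>V. open V \<and> 0 \<in> V \<and> (\<forall>x\<in>V. \<forall>y\<in>V. x - y \<in> U)"
proof -
  have o: "open ((\<lambda>p::'a\<times>'a. fst p - snd p) -` U)"
    using c U(1) open_vimage by blast
  have "(0,0) \<in> (\<lambda>p::'a\<times>'a. fst p - snd p) -` U" using U by simp
  then obtain A B where "open A" "open B" "(0,0) \<in> A \<times> B" "A \<times> B \<subseteq> (\<lambda>p::'a\<times>'a. fst p - snd p) -` U"
    using open_prod_elim[OF o] by metis
  then show ?thesis
    by (intro exI[of _ "A \<inter> B"]) auto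
qed

lemma sub_cont_prod:
  assumes "continuous_on UNIV (\<lambda>p::'a::{ab_group_add,topological_space}\<times>'a. fst p - snd p)"
    and "continuous_on UNIV (\<lambda>p::'b::{ab_group_add,topological_space}\<times>'b. fst p - snd p)"
  shows "continuous_on UNIV (\<lambda>p::('a\<times>'b)\<times>('a\<times>'b). fst p - snd p)"
proof -
  have e: "(\<lambda>p::('a\<times>'b)\<times>('a\<times>'b). fst p - snd p) =
     (\<lambda>p. ((\<lambda>q. fst q - snd q) (fst (fst p), fst (snd p)), (\<lambda>q. fst q - snd q) (snd (fst p), snd (snd p))))"
    by (auto simp: prod_eq_iff)
  have 1: "continuous_on UNIV (\<lambda>p::('a\<times>'b)\<times>('a\<times>'b). (\<lambda>q. fst q - snd q) (fst (fst p), fst (snd p)))"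
    by (rule continuous_on_compose2[OF assms(1)]) (auto intro!: continuous_intros)
  have 2: "continuous_on UNIV (\<lambda>p::('a\<times>'b)\<times>('a\<times>'b). (\<lambda>q. fst q - snd q) (snd (fst p), snd (snd p)))"
    by (rule continuous_on_compose2[OF assms(2)]) (auto intro!: continuous_intros)
  show ?thesis unfolding e by (rule continuous_on_Pair[OF 1 2])
qed

lemma sub_cont_lca:
  assumes "lca_group TYPE('a::{ab_group_add,t2_space})"
  shows "continuous_on UNIV (\<lambda>p::'a\<times>'a. fst p - snd p)"
proof -
  have a: "continuous_on UNIV (\<lambda>p::'a \<times> 'a. fst p + snd p)" and m: "continuous_on UNIV (uminus :: 'a \<Rightarrow> 'a)"
    using assms unfolding lca_group_def by auto
  have e: "(\<lambda>p::'a\<times>'a. fst p - snd p) = (\<lambda>p. (\<lambda>q. fst q + snd q) (fst p, uminus (snd p)))"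
    by auto
  have "continuous_on UNIV (\<lambda>p::'a\<times>'a. (fst p, uminus (snd p)))"
    by (intro continuous_on_Pair continuous_on_fst continuous_on_id continuous_on_compose2[OF m]) 
       (auto intro!: continuous_intros)
  then show ?thesis unfolding e
    by (rule continuous_on_compose2[OF a]) auto
qed

lemma sub_cont_real: "continuous_on UNIV (\<lambda>p::(real^'n)\<times>(real^'n). fst p - snd p)"
  by (intro continuous_intros)

lemma count_lemma:
  fixes L :: "'a::{ab_group_add,topological_space} set"
  assumes c: "continuous_on UNIV (\<lambda>p::'a\<times>'a. fst p - snd p)"
  and sub: "\<forall>a\<in>L. \<forall>b\<in>L. a - b \<in> L"
  and U0: "open U0" "0 \<in> U0" "U0 \<inter> L = {0}"
  and C: "compact C"
  shows "\<exists>m. \<forall>s. finite (L \<inter> {x. x - s \<in> C}) \<and> card (L \<inter> {x. x - s \<in> C}) \<le> m"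
proof -
  obtain V where V: "open V" "0 \<in> V" "\<And>x y. x\<in>V \<Longrightarrow> y\<in>V \<Longrightarrow> x - y \<in> U0"
    using sub_nhd[OF c U0(1,2)] by blast
  define N where "N c = {x. x - c \<in> V}" for c
  have oN: "open (N c)" for c
  proof -
    have "continuous_on UNIV (\<lambda>x::'a. (\<lambda>p. fst p - snd p) (x, c))"
      by (rule continuous_on_compose2[OF c]) (auto intro!: continuous_intros)
    then have "open ((\<lambda>x::'a. x - c) -` V)" using V(1) open_vimage by fastforce
    then show ?thesis unfolding N_def by (simp add: vimage_def)
  qed
  have "C \<subseteq> \<Union>(N ` C)" using V(2) by (auto simp: N_def)
  then obtain D where D: "D \<subseteq> C" "finite D" "C \<subseteq> \<Union>(N ` D)"
    using compactE_image[OF C, of C N] oN by metis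
  have "finite (L \<inter> {x. x - s \<in> C}) \<and> card (L \<inter> {x. x - s \<in> C}) \<le> card D" for s
  proof -
    define A where "A c = L \<inter> {x. x - s - c \<in> V}" for c
    have sub1: "L \<inter> {x. x - s \<in> C} \<subseteq> (\<Union>c\<in>D. A c)"
      using D(3) by (auto simp: A_def N_def)
    have single: "x = y" if "x \<in> A c" "y \<in> A c" for x y c
    proof -
      have "(x - s - c) - (y - s - c) \<in> U0" using V(3)[of "x-s-c" "y-s-c"] that unfolding A_def by blast
      moreover have "(x - s - c) - (y - s - c) = x - y" by (simp add: algebra_simps)
      ultimately have "x - y \<in> U0" by simp
      moreover have "x - y \<in> L" using sub that unfolding A_def by blast
      ultimately have "x - y \<in> U0 \<inter> L" by blast
      then have "x - y = 0" using U0(3) by blast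
      then show ?thesis by simp
    qed
    have finA: "finite (A c)" for c
    proof (cases "A c = {}")
      case False
      then obtain x where "x \<in> A c" by auto
      then have "A c \<subseteq> {x}" using single by blast
      then show ?thesis using finite_subset by blast
    qed simp
    have cardA: "card (A c) \<le> 1" for c
      using card_le_Suc0_iff_eq[OF finA] single by auto
    have fU: "finite (\<Union>c\<in>D. A c)" using D(2) finA by blast
    have "card (\<Union>c\<in>D. A c) \<le> (\<Sum>c\<in>D. card (A c))" by (rule card_UN_le[OF D(2)])
    also have "\<dots> \<le> (\<Sum>c\<in>D. 1)" by (rule sum_mono) (rule cardA)
    finally have "card (\<Union>c\<in>D. A c) \<le> card D" by simp
    moreover have "card (L \<inter> {x. x - s \<in> C}) \<le> card (\<Union>c\<in>D. A c)"
      by (rule card_mono[OF fU sub1])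
    ultimately show ?thesis using finite_subset[OF sub1 fU] by linarith
  qed
  then show ?thesis by blast
qed

definition aa :: "int \<Rightarrow> real" where "aa j = 1 / (1 + (real_of_int j)^2)"

lemma aa_nonneg: "aa j \<ge> 0" by (simp add: aa_def)

lemma recip_le:
  fixes a b c :: real
  assumes "0 < b" "b \<le> c * a" "0 < a"
  shows "1 / a \<le> c / b"
  using assms by (simp add: divide_simps mult.commute)

lemma int_sum_bound: "\<exists>A. \<forall>J. finite J \<longrightarrow> sum aa J \<le> A"
proof -
  define g where "g n = 1 / (1 + (real n)^2)" for n :: nat
  have s2: "summable (\<lambda>n::nat. inverse (real n ^ 2))"
    by (rule inverse_power_summable) simp
  have sg: "summable g"
  proof (rule summable_comparison_test'[OF s2])
    fix n :: nat assume n: "n \<ge> 1"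
    have "1 / (1 + (real n)^2) \<le> 1 / (real n)^2"
      using n by (intro recip_le) (auto simp: add_pos_nonneg)
    then show "norm (g n) \<le> inverse (real n ^ 2)"
      by (simp add: g_def divide_inverse)
  qed
  have gnn: "g n \<ge> 0" for n by (simp add: g_def)
  have "sum aa J \<le> 2 * suminf g" if "finite J" for J
  proof -
    define Jp where "Jp = {j\<in>J. j \<ge> 0}"
    define Jn where "Jn = {j\<in>J. j < 0}"
    have fp: "finite Jp" "finite Jn" using that by (auto simp: Jp_def Jn_def)
    have "J = Jp \<union> Jn" "Jp \<inter> Jn = {}" by (auto simp: Jp_def Jn_def)
    then have "sum aa J = sum aa Jp + sum aa Jn" using fp sum.union_disjoint by metis
    moreover have "sum aa Jp \<le> suminf g"
    proof -
      have "inj_on nat Jp" by (auto simp: Jp_def inj_on_def)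
      then have "sum g (nat ` Jp) = sum (g \<circ> nat) Jp" by (rule sum.reindex)
      also have "\<dots> = sum aa Jp"
        by (rule sum.cong) (auto simp: Jp_def g_def aa_def)
      finally have "sum aa Jp = sum g (nat ` Jp)" by simp
      also have "\<dots> \<le> suminf g" using sum_le_suminf[OF sg, of "nat ` Jp"] fp gnn by auto
      finally show ?thesis .
    qed
    moreover have "sum aa Jn \<le> suminf g"
    proof -
      have "inj_on (\<lambda>j. nat (-j)) Jn" by (auto simp: Jn_def inj_on_def)
      then have "sum g ((\<lambda>j. nat (-j)) ` Jn) = sum (g \<circ> (\<lambda>j. nat (-j))) Jn" by (rule sum.reindex)
      also have "\<dots> = sum aa Jn"
        by (rule sum.cong) (auto simp: Jn_def g_def aa_def)
      finally have "sum aa Jn = sum g ((\<lambda>j. nat (-j)) ` Jn)" by simp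
      also have "\<dots> \<le> suminf g" using sum_le_suminf[OF sg, of "(\<lambda>j. nat (-j)) ` Jn"] fp gnn by auto
      finally show ?thesis .
    qed
    ultimately show ?thesis by linarith
  qed
  then show ?thesis by blast
qed

lemma prod_bound:
  fixes T :: "('n::finite \<Rightarrow> int) set"
  assumes "finite T" and A: "\<forall>J. finite J \<longrightarrow> sum aa J \<le> A"
  shows "(\<Sum>k\<in>T. \<Prod>i\<in>UNIV. aa (k i)) \<le> A ^ CARD('n)"
proof -
  define J where "J = (\<Union>i. (\<lambda>k. k i) ` T)"
  have fJ: "finite J" using assms(1) by (simp add: J_def)
  have fP: "finite (PiE UNIV (\<lambda>_::'n. J))" by (simp add: fJ finite_PiE)
  have sub: "T \<subseteq> PiE UNIV (\<lambda>_. J)" by (auto simp: J_def PiE_iff)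
  have "(\<Sum>k\<in>T. \<Prod>i\<in>UNIV. aa (k i)) \<le> (\<Sum>k\<in>PiE UNIV (\<lambda>_::'n. J). \<Prod>i\<in>UNIV. aa (k i))"
    using sum_mono2[OF fP sub, of "\<lambda>k. \<Prod>i\<in>UNIV. aa (k i)"] by (simp add: aa_nonneg prod_nonneg)
  also have "\<dots> = (\<Prod>i\<in>(UNIV::'n set). \<Sum>j\<in>J. aa j)"
    by (rule prod_sum_PiE[symmetric]) (auto simp: fJ)
  also have "\<dots> \<le> (\<Prod>i\<in>(UNIV::'n set). A)"
    by (rule prod_mono) (auto simp: A fJ sum_nonneg aa_nonneg)
  finally show ?thesis by simp
qed

lemma one_plus_pow: assumes r: "(r::real) \<ge> 0" and n: "n \<ge> 1" shows "1 + r ^ n \<le> (1 + r) ^ n"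
  using n
proof (induction n rule: dec_induct)
  case base then show ?case by simp
next
  case (step n)
  have "1 + r ^ Suc n \<le> (1 + r) * (1 + r ^ n)"
    using r by (simp add: algebra_simps)
  also have "\<dots> \<le> (1 + r) * (1 + r) ^ n"
    using step r by (intro mult_left_mono) auto
  finally show ?case by simp
qed

lemma pow_split: "(t::real) \<ge> 0 \<Longrightarrow> (1 + t) ^ d \<le> 2 ^ d * (1 + t ^ d)"
proof (cases "t \<le> 1")
  case True
  assume t: "t \<ge> 0"
  have "(1 + t) ^ d \<le> 2 ^ d" using True t by (intro power_mono) auto
  also have "\<dots> \<le> 2 ^ d * (1 + t ^ d)" using t by simp
  finally show ?thesis .
next
  case False
  assume t: "t \<ge> 0"
  have "(1 + t) ^ d \<le> (2 * t) ^ d" using False t by (intro power_mono) auto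
  also have "\<dots> \<le> 2 ^ d * (1 + t ^ d)" using t by (simp add: power_mult_distrib)
  finally show ?thesis .
qed

lemma pointwise:
  fixes u :: "real^'n::finite"
  shows "1 / (1 + norm u ^ (2 * CARD('n))) \<le> 6 ^ CARD('n) * (\<Prod>i\<in>UNIV. aa (floor (u $ i)))"
proof -
  let ?d = "CARD('n)"
  have "(\<Prod>i\<in>UNIV. 1 + (u$i)^2) \<le> (\<Prod>i\<in>(UNIV::'n set). 1 + norm u ^ 2)"
  proof (rule prod_mono)
    fix i
    have "\<bar>u$i\<bar> \<le> norm u" by (rule component_le_norm_cart)
    then have "(u$i)^2 \<le> (norm u)^2"
      by (metis abs_le_square_iff abs_norm_cancel)
    then show "0 \<le> 1 + (u$i)^2 \<and> 1 + (u$i)^2 \<le> 1 + norm u ^ 2" by simp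
  qed
  also have "\<dots> = (1 + norm u ^ 2) ^ ?d" by simp
  also have "\<dots> \<le> 2 ^ ?d * (1 + (norm u ^ 2) ^ ?d)" by (rule pow_split) simp
  also have "\<dots> = 2 ^ ?d * (1 + norm u ^ (2 * ?d))" by (simp add: power_mult)
  finally have P: "(\<Prod>i\<in>UNIV. 1 + (u$i)^2) \<le> 2 ^ ?d * (1 + norm u ^ (2 * ?d))" .
  have pp: "(\<Prod>i\<in>UNIV. 1 + (u$i)^2) > 0" by (intro prod_pos) (simp add: add_pos_nonneg)
  have "1 / (1 + norm u ^ (2 * ?d)) \<le> 2 ^ ?d / (\<Prod>i\<in>UNIV. 1 + (u$i)^2)"
    using P pp by (simp add: divide_simps add_pos_nonneg)
  also have "\<dots> = 2 ^ ?d * (\<Prod>i\<in>UNIV. 1 / (1 + (u$i)^2))"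
    by (simp add: prod_dividef)
  also have "\<dots> \<le> 2 ^ ?d * (\<Prod>i\<in>(UNIV::'n set). 3 * aa (floor (u $ i)))"
  proof (intro mult_left_mono prod_mono conjI)
    fix i
    let ?k = "real_of_int (floor (u $ i))"
    have k1: "?k \<le> u $ i" "u $ i < ?k + 1" by linarith+
    have "?k^2 \<le> 2 * (u$i)^2 + 2"
    proof (cases "?k \<ge> 0")
      case True then have "?k^2 \<le> (u$i)^2" using k1 by (intro power_mono) auto
      then show ?thesis using zero_le_power2[of "u$i"] by linarith
    next
      case False
      then have "\<bar>?k\<bar> \<le> \<bar>u$i\<bar> + 1" using k1 by linarith
      then have "?k^2 \<le> (\<bar>u$i\<bar> + 1)^2" by (metis abs_ge_zero abs_le_square_iff abs_of_nonneg add_nonneg_nonneg zero_le_one)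
      also have "\<dots> \<le> 2 * (u$i)^2 + 2"
      proof -
        have h: "0 \<le> (\<bar>u$i\<bar> - 1)^2" by simp
        have "(\<bar>u$i\<bar>)^2 = (u$i)^2" by simp
        then show ?thesis using h unfolding power2_eq_square by (simp add: algebra_simps)
      qed
      finally show ?thesis .
    qed
    then have "1 + ?k^2 \<le> 3 + 3 * (u$i)^2" using zero_le_power2[of "u$i"] by linarith
    then have "1 + ?k^2 \<le> 3 * (1 + (u$i)^2)" by simp
    then have "1 / (1 + (u$i)^2) \<le> 3 / (1 + ?k^2)"
      by (intro recip_le) (auto simp: add_pos_nonneg)
    then show "1 / (1 + (u$i)^2) \<le> 3 * aa (floor (u $ i))"
      by (simp add: aa_def)
  qed (auto simp: aa_nonneg)
  also have "\<dots> = 6 ^ ?d * (\<Prod>i\<in>UNIV. aa (floor (u $ i)))"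
    by (simp add: prod.distrib power_mult_distrib[symmetric])
  finally show ?thesis .
qed


lemma core:
  fixes L :: "('g::{ab_group_add, t2_space} \<times> (real^'n::finite) \<times> ('h::{ab_group_add, t2_space})) set"
  assumes lg: "lca_group TYPE('g)" and lh: "lca_group TYPE('h)" and cp: "cut_and_project L"
    and K: "compact K" and W: "compact W"
  shows "\<exists>C\<ge>0. \<forall>\<phi> \<psi> t. schwartz \<phi> \<and> Cc \<psi> \<and> supp \<psi> \<subseteq> W \<longrightarrow>
     (\<lambda>p. norm (\<phi> (fst (snd p)) * \<psi> (snd (snd p)))) summable_on {p\<in>L. fst p \<in> (+) t ` K} \<and>
     infsum (\<lambda>p. norm (\<phi> (fst (snd p)) * \<psi> (snd (snd p)))) {p\<in>L. fst p \<in> (+) t ` K}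
       \<le> C * (SUP y. norm (\<psi> y)) * (SUP x. (1 + norm x ^ (2 * CARD('n))) * norm (\<phi> x))"
proof -
  let ?d = "CARD('n)"
  have csub: "continuous_on UNIV (\<lambda>p::('g \<times> (real^'n) \<times> 'h) \<times> ('g \<times> (real^'n) \<times> 'h). fst p - snd p)"
    by (rule sub_cont_prod[OF sub_cont_lca[OF lg] sub_cont_prod[OF sub_cont_real sub_cont_lca[OF lh]]])
  note cpd = cp[unfolded cut_and_project_def]
  have L0: "0 \<in> L" by (rule conjunct1[OF cpd])
  have Ladd: "\<forall>a\<in>L. \<forall>b\<in>L. a + b \<in> L" by (rule conjunct1[OF conjunct2[OF cpd]])
  have Lneg: "\<forall>a\<in>L. - a \<in> L" by (rule conjunct1[OF conjunct2[OF conjunct2[OF cpd]]])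
  have Ldisc: "\<forall>z\<in>L. \<exists>U. open U \<and> z \<in> U \<and> U \<inter> L = {z}"
    by (rule conjunct1[OF conjunct2[OF conjunct2[OF conjunct2[OF cpd]]]])
  have Lsub: "\<forall>a\<in>L. \<forall>b\<in>L. a - b \<in> L"
  proof (intro ballI)
    fix a b assume ab: "a \<in> L" "b \<in> L"
    then have "a + (- b) \<in> L" using Ladd Lneg by blast
    then show "a - b \<in> L" by simp
  qed
  obtain U0 where U0: "open U0" "0 \<in> U0" "U0 \<inter> L = {0}"
    using Ldisc L0 by blast
  define Cs where "Cs = K \<times> (cbox (0::real^'n) (\<chi> i. 1) \<times> W)"
  have cCs: "compact Cs" unfolding Cs_def using K W by (intro compact_Times compact_cbox) auto
  obtain m where m: "\<And>s. finite (L \<inter> {x. x - s \<in> Cs}) \<and> card (L \<inter> {x. x - s \<in> Cs}) \<le> m"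
    using count_lemma[OF csub Lsub U0 cCs] by blast
  obtain A where A: "\<forall>J. finite J \<longrightarrow> sum aa J \<le> A" using int_sum_bound by blast
  have A0: "A \<ge> 0" using A[rule_format, of "{}"] by simp
  define C where "C = 6 ^ ?d * real m * A ^ ?d"
  have C0: "C \<ge> 0" unfolding C_def using A0 by simp
  have d1: "2 * ?d \<ge> 1" using finite_UNIV_card_ge_0[where 'a='n] by simp
  have main: "(\<lambda>p. norm (\<phi> (fst (snd p)) * \<psi> (snd (snd p)))) summable_on {p\<in>L. fst p \<in> (+) t ` K} \<and>
     infsum (\<lambda>p. norm (\<phi> (fst (snd p)) * \<psi> (snd (snd p)))) {p\<in>L. fst p \<in> (+) t ` K}
       \<le> C * (SUP y. norm (\<psi> y)) * (SUP x. (1 + norm x ^ (2 * ?d)) * norm (\<phi> x))"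
    if sch: "schwartz \<phi>" and cc: "Cc \<psi>" and sW: "supp \<psi> \<subseteq> W" for \<phi> \<psi> t
  proof -
    define M where "M = (SUP x. (1 + norm x ^ (2 * ?d)) * norm (\<phi> x))"
    define S where "S = (SUP y. norm (\<psi> y))"
    have bddM: "bdd_above (range (\<lambda>x. (1 + norm x ^ (2 * ?d)) * norm (\<phi> x)))"
    proof -
      have "bounded (range (\<lambda>x. (1 + norm x) ^ (2 * ?d) * norm (pdiffs [] \<phi> x)))"
        using sch unfolding schwartz_def by blast
      then obtain B where B: "\<And>x. norm ((1 + norm x) ^ (2 * ?d) * norm (\<phi> x)) \<le> B"
        unfolding bounded_iff by auto
      have "(1 + norm x ^ (2 * ?d)) * norm (\<phi> x) \<le> B" for x
      proof -
        have "(1 + norm x ^ (2 * ?d)) * norm (\<phi> x) \<le> (1 + norm x) ^ (2 * ?d) * norm (\<phi> x)"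
          by (intro mult_right_mono one_plus_pow d1) auto
        also have "\<dots> \<le> B" using B[of x] by simp
        finally show ?thesis .
      qed
      then show ?thesis by (intro bdd_aboveI2) 
    qed
    have Mx: "(1 + norm x ^ (2 * ?d)) * norm (\<phi> x) \<le> M" for x
      unfolding M_def by (rule cSUP_upper[OF UNIV_I bddM])
    have "0 \<le> (1 + norm (0::real^'n) ^ (2 * ?d)) * norm (\<phi> 0)" by simp
    then have M0: "M \<ge> 0" using Mx[of 0] by linarith
    have phib: "norm (\<phi> u) \<le> M * (6 ^ ?d * (\<Prod>i\<in>UNIV. aa (floor (u $ i))))" for u
    proof -
      have pos: "1 + norm u ^ (2 * ?d) > 0" by (simp add: add_pos_nonneg)
      have "norm (\<phi> u) = ((1 + norm u ^ (2 * ?d)) * norm (\<phi> u)) / (1 + norm u ^ (2 * ?d))"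
        using pos by simp
      also have "\<dots> \<le> M / (1 + norm u ^ (2 * ?d))"
        using Mx[of u] pos by (intro divide_right_mono) auto
      also have "\<dots> = M * (1 / (1 + norm u ^ (2 * ?d)))" by simp
      finally have "norm (\<phi> u) \<le> M * (1 / (1 + norm u ^ (2 * ?d)))" .
      also have "\<dots> \<le> M * (6 ^ ?d * (\<Prod>i\<in>UNIV. aa (floor (u $ i))))"
        by (intro mult_left_mono pointwise M0)
      finally show ?thesis .
    qed
    have supsub: "{y. \<psi> y \<noteq> 0} \<subseteq> supp \<psi>" unfolding supp_def by (rule closure_subset)
    have psi0: "\<psi> y = 0" if "y \<notin> W" for y
    proof (rule ccontr)
      assume "\<psi> y \<noteq> 0"
      then have "y \<in> supp \<psi>" using supsub by blast
      then show False using that sW by blast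
    qed
    have bddS: "bdd_above (range (\<lambda>y. norm (\<psi> y)))"
    proof -
      have ct: "continuous_on UNIV \<psi>" and cs: "compact (supp \<psi>)"
        using cc unfolding Cc_def supp_def by auto
      have "compact (\<psi> ` supp \<psi>)"
        by (rule compact_continuous_image[OF continuous_on_subset[OF ct subset_UNIV] cs])
      then have "bounded (\<psi> ` supp \<psi>)" by (rule compact_imp_bounded)
      then obtain B where B0: "\<forall>x\<in>\<psi> ` supp \<psi>. norm x \<le> B"
        unfolding bounded_iff by auto
      have B: "norm (\<psi> y) \<le> B" if "y \<in> supp \<psi>" for y using B0 that by simp
      have "norm (\<psi> y) \<le> max B 0" for y
      proof (cases "y \<in> supp \<psi>")
        case True then show ?thesis using B[of y] by simp
      next
        case False then have "\<psi> y = 0" using supsub by blast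
        then show ?thesis by simp
      qed
      then show ?thesis by (intro bdd_aboveI2)
    qed
    have Sy: "norm (\<psi> y) \<le> S" for y unfolding S_def by (rule cSUP_upper[OF UNIV_I bddS])
    have "0 \<le> norm (\<psi> 0)" by simp
    then have S0: "S \<ge> 0" using Sy[of 0] by linarith
    define \<kappa> where "\<kappa> p = (\<lambda>i. floor (fst (snd p) $ i))" for p :: "'g \<times> (real^'n) \<times> 'h"
    define g where "g k = (\<Prod>i\<in>UNIV. aa (k i))" for k :: "'n \<Rightarrow> int"
    have g0: "g k \<ge> 0" for k unfolding g_def by (simp add: prod_nonneg aa_nonneg)
    define f where "f p = norm (\<phi> (fst (snd p)) * \<psi> (snd (snd p)))" for p :: "'g \<times> (real^'n) \<times> 'h"
    have f0: "f p \<ge> 0" for p unfolding f_def by simp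
    have fb: "f p \<le> (if snd (snd p) \<in> W then S * M * 6 ^ ?d * g (\<kappa> p) else 0)" for p
    proof (cases "snd (snd p) \<in> W")
      case True
      have "f p = norm (\<phi> (fst (snd p))) * norm (\<psi> (snd (snd p)))" unfolding f_def by (simp add: norm_mult)
      also have "\<dots> \<le> (M * (6 ^ ?d * g (\<kappa> p))) * S"
      proof (rule mult_mono)
        show "norm (\<phi> (fst (snd p))) \<le> M * (6 ^ ?d * g (\<kappa> p))"
          using phib[of "fst (snd p)"] unfolding g_def \<kappa>_def by simp
        show "0 \<le> M * (6 ^ ?d * g (\<kappa> p))" using M0 g0[of "\<kappa> p"] by simp
      qed (auto simp: Sy)
      finally show ?thesis using True by (simp add: algebra_simps)
    next
      case False then show ?thesis by (simp add: f_def psi0)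
    qed
    define Set where "Set = {p\<in>L. fst p \<in> (+) t ` K}"
    have fin: "sum f F \<le> C * S * M" if F: "finite F" "F \<subseteq> Set" for F
    proof -
      define F' where "F' = {p\<in>F. snd (snd p) \<in> W}"
      have fF': "finite F'" using F unfolding F'_def by simp
      have "sum f F \<le> sum (\<lambda>p. if snd (snd p) \<in> W then S * M * 6 ^ ?d * g (\<kappa> p) else 0) F"
        by (rule sum_mono) (rule fb)
      also have "\<dots> = sum (\<lambda>p. S * M * 6 ^ ?d * g (\<kappa> p)) F'"
        unfolding F'_def using F(1) by (simp add: sum.inter_filter)
      also have "\<dots> = S * M * 6 ^ ?d * sum (g \<circ> \<kappa>) F'"
        by (simp add: sum_distrib_left)
      also have "sum (g \<circ> \<kappa>) F' \<le> real m * A ^ ?d"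
      proof -
        have "sum (g \<circ> \<kappa>) F' = (\<Sum>k\<in>\<kappa> ` F'. sum (g \<circ> \<kappa>) {p\<in>F'. \<kappa> p = k})"
          using fF' by (rule sum.image_gen)
        also have "\<dots> = (\<Sum>k\<in>\<kappa> ` F'. real (card {p\<in>F'. \<kappa> p = k}) * g k)"
          by (rule sum.cong) auto
        also have "\<dots> \<le> (\<Sum>k\<in>\<kappa> ` F'. real m * g k)"
        proof (rule sum_mono)
          fix k assume "k \<in> \<kappa> ` F'"
          define s where "s = (t, ((\<chi> i. real_of_int (k i)) :: real^'n), (0::'h))"
          have "{p\<in>F'. \<kappa> p = k} \<subseteq> L \<inter> {x. x - s \<in> Cs}"
          proof
            fix p assume p: "p \<in> {p\<in>F'. \<kappa> p = k}"
            then have pL: "p \<in> L" and pt: "fst p \<in> (+) t ` K" and pW: "snd (snd p) \<in> W"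
              using F(2) unfolding F'_def Set_def by auto
            have kk: "k i = floor (fst (snd p) $ i)" for i using p unfolding \<kappa>_def by auto
            have "fst p - t \<in> K" using pt by auto
            moreover have "fst (snd p) - (\<chi> i. real_of_int (k i)) \<in> cbox 0 (\<chi> i. 1)"
            proof -
              have "0 \<le> fst (snd p) $ i - of_int (floor (fst (snd p) $ i)) \<and>
                    fst (snd p) $ i - of_int (floor (fst (snd p) $ i)) \<le> 1" for i
                using of_int_floor_le[of "fst (snd p) $ i"] real_of_int_floor_add_one_ge[of "fst (snd p) $ i"]
                by linarith
              then show ?thesis unfolding mem_box_cart kk by simp
            qed
            moreover have eqps: "p - s = (fst p - t, fst (snd p) - (\<chi> i. real_of_int (k i)), snd (snd p))"
              unfolding s_def by (simp add: prod_eq_iff)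
            ultimately have "p - s \<in> Cs"
              using pW unfolding Cs_def eqps by (simp add: mem_Times_iff)
            then show "p \<in> L \<inter> {x. x - s \<in> Cs}" using pL by simp
          qed
          then have "card {p\<in>F'. \<kappa> p = k} \<le> m"
            using card_mono[OF conjunct1[OF m[of s]]] conjunct2[OF m[of s]] by (meson le_trans)
          then show "real (card {p\<in>F'. \<kappa> p = k}) * g k \<le> real m * g k"
            by (intro mult_right_mono g0) auto
        qed
        also have "\<dots> = real m * sum g (\<kappa> ` F')" by (simp add: sum_distrib_left)
        also have "\<dots> \<le> real m * A ^ ?d"
          using prod_bound[OF finite_imageI[OF fF'] A] unfolding g_def
          by (intro mult_left_mono) auto
        finally show ?thesis .
      qed
      then have "S * M * 6 ^ ?d * sum (g \<circ> \<kappa>) F' \<le> S * M * 6 ^ ?d * (real m * A ^ ?d)"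
        using S0 M0 by (intro mult_left_mono) auto
      also have "\<dots> = C * S * M" unfolding C_def by (simp add: algebra_simps)
      finally show ?thesis .
    qed
    have summ: "f summable_on Set"
    proof (rule nonneg_bdd_above_summable_on)
      show "bdd_above (sum f ` {F. F \<subseteq> Set \<and> finite F})"
        using fin by (intro bdd_aboveI2[where M="C * S * M"]) auto
    qed (rule f0)
    have "infsum f Set \<le> C * S * M"
      by (rule infsum_le_finite_sums[OF summ]) (rule fin)
    then show ?thesis using summ unfolding f_def Set_def S_def M_def by simp
  qed
  show ?thesis using C0 main by blast
qed

theorem lemma5p2:
  fixes \<L> :: "('g::{ab_group_add, t2_space} \<times> (real^'n::finite) \<times> ('h::{ab_group_add, t2_space})) set"
  assumes "lca_group TYPE('g)" and "lca_group TYPE('h)"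
    and "cut_and_project \<L>"
  shows "(\<forall>\<phi> \<psi> K. schwartz \<phi> \<and> Cc \<psi> \<and> compact K \<longrightarrow>
            (\<lambda>p. norm (\<phi> (fst (snd p)) * \<psi> (snd (snd p)))) summable_on {p\<in>\<L>. fst p \<in> K})
       \<and> (\<forall>K W. compact K \<and> compact W \<longrightarrow>
            (\<exists>C. \<forall>\<phi> \<psi>. schwartz \<phi> \<and> Cc \<psi> \<and> supp \<psi> \<subseteq> W \<longrightarrow>
               (\<forall>t. omega_var \<L> \<phi> \<psi> ((+) t ` K)
                 \<le> C * (SUP y. norm (\<psi> y))
                     * (SUP x. (1 + norm x ^ (2 * CARD('n))) * norm (\<phi> x)))))"
proof (intro conjI allI impI)
  fix \<phi> :: "real^'n \<Rightarrow> complex" and \<psi> :: "'h \<Rightarrow> complex" and K :: "'g set"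
  assume a: "schwartz \<phi> \<and> Cc \<psi> \<and> compact K"
  have "compact (supp \<psi>)" using a unfolding Cc_def supp_def by blast
  then have "(\<lambda>p. norm (\<phi> (fst (snd p)) * \<psi> (snd (snd p)))) summable_on {p\<in>\<L>. fst p \<in> (+) 0 ` K}"
    using core[OF assms, of K "supp \<psi>"] a by blast
  then show "(\<lambda>p. norm (\<phi> (fst (snd p)) * \<psi> (snd (snd p)))) summable_on {p\<in>\<L>. fst p \<in> K}"
    by simp
next
  fix K :: "'g set" and W :: "'h set"
  assume "compact K \<and> compact W"
  then obtain C where C: "\<forall>\<phi> \<psi> t. schwartz \<phi> \<and> Cc \<psi> \<and> supp \<psi> \<subseteq> W \<longrightarrow>
     infsum (\<lambda>p. norm (\<phi> (fst (snd p)) * \<psi> (snd (snd p)))) {p\<in>\<L>. fst p \<in> (+) t ` K}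
       \<le> C * (SUP y. norm (\<psi> y)) * (SUP x. (1 + norm x ^ (2 * CARD('n))) * norm (\<phi> x))"
    using core[OF assms, of K W] by blast
  show "\<exists>C. \<forall>\<phi> \<psi>. schwartz \<phi> \<and> Cc \<psi> \<and> supp \<psi> \<subseteq> W \<longrightarrow>
               (\<forall>t. omega_var \<L> \<phi> \<psi> ((+) t ` K)
                 \<le> C * (SUP y. norm (\<psi> y))
                     * (SUP x. (1 + norm x ^ (2 * CARD('n))) * norm (\<phi> x)))"
    unfolding omega_var_def using C by blast
qed

end
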